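(* Let $X$ be a BN with full support on the DAG $\mathcal G$ with states $\mathcal A$, $f:\mathcal A\to\mathcal B$ a surjection and $U_v=f(X_v)$, and assume (D3) holds. Then for every vertex $v$ with $depth(v)=1$, all $w,\tilde w\in\mathcal A^{pa(v)}$ with $f(w)=f(\tilde w)$, and all $b\in\mathcal B$, $$\mathbb P(U_v=b\mid X_{pa(v)}=w)=\mathbb P(U_v=b\mid X_{pa(v)}=\tilde w).$$
   Context: $\mathcal G=(V,E)$ is a finite DAG; $pa(v)$ parents; $V_s$ parentless vertices, $V_p=V\setminus V_s$; $depth(v)$ maximal number of edges of a directed path from a vertex of $V_s$ to $v$. A BN on $\mathcal G$ with states $\mathcal A$ (finite) is specified by distributions $\alpha_v$ on $\mathcal A$ for $v\in V_s$ and CPDs $P_v(\cdot\mid a_{pa(v)})$ for $v\in V_p$; law $\prod_{v\in V_s}\alpha_v(x_v)\prod_{v\in V_p}P_v(x_v\mid x_{pa(v)})$; full support: all $x\in\mathcal A^V$ have positive probability. $\mathbb P_{\tilde\alpha}$ is the law with the same CPDs and initial distribution $\tilde\alpha$. $f$ applied coordinatewise. (D3): for every initial distribution $\tilde\alpha$, $(U_v)$ under $\mathbb P_{\tilde\alpha}$ factorises over $\mathcal G$ (law of form $\prod_vq_v(u_v\mid u_{pa(v)})$), and for every $v\in V_p$, $b_v$, $b_{pa(v)}$ the value $\mathbb P_{\tilde\alpha}(U_v=b_v\mid U_{pa(v)}=b_{pa(v)})$ is the same for all $\tilde\alpha$ with $\mathbb P_{\tilde\alpha}(U_{pa(v)}=b_{pa(v)})>0$.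 *)

theory Defs
  imports Complex_Main
begin

definition edges :: "('v \<Rightarrow> 'v set) \<Rightarrow> ('v \<times> 'v) set" where
  "edges pa = {(u, v). u \<in> pa v}"

definition is_dag :: "('v \<Rightarrow> 'v set) \<Rightarrow> bool" where
  "is_dag pa \<longleftrightarrow> acyclic (edges pa)"

definition is_path :: "('v \<Rightarrow> 'v set) \<Rightarrow> 'v list \<Rightarrow> bool" where
  "is_path pa xs \<longleftrightarrow> xs \<noteq> [] \<and> (\<forall>i. Suc i < length xs \<longrightarrow> xs ! i \<in> pa (xs ! Suc i))"

definition depth :: "('v \<Rightarrow> 'v set) \<Rightarrow> 'v \<Rightarrow> nat" where
  "depth pa v = Max {length xs - 1 | xs. is_path pa xs \<and> pa (hd xs) = {} \<and> last xs = v}"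

definition restr :: "'v set \<Rightarrow> ('v \<Rightarrow> 'c) \<Rightarrow> 'v \<Rightarrow> 'c" where
  "restr S x = (\<lambda>u. if u \<in> S then x u else undefined)"

definition is_dist :: "('c::finite \<Rightarrow> real) \<Rightarrow> bool" where
  "is_dist d \<longleftrightarrow> (\<forall>a. 0 \<le> d a) \<and> (\<Sum>a\<in>UNIV. d a) = 1"

definition valid_init :: "('v \<Rightarrow> 'v set) \<Rightarrow> ('v \<Rightarrow> 'a::finite \<Rightarrow> real) \<Rightarrow> bool" where
  "valid_init pa \<alpha> \<longleftrightarrow> (\<forall>v. pa v = {} \<longrightarrow> is_dist (\<alpha> v))"

text \<open>CPDs P v (a_pa(v)) a for the vertices with parents; the parent configuration
  is passed as a restricted function.\<close>
definition valid_cpds :: "('v \<Rightarrow> 'v set) \<Rightarrow> ('v \<Rightarrow> ('v \<Rightarrow> 'a) \<Rightarrow> 'a::finite \<Rightarrow> real) \<Rightarrow> bool" where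
  "valid_cpds pa P \<longleftrightarrow> (\<forall>v. pa v \<noteq> {} \<longrightarrow> (\<forall>w. is_dist (P v (restr (pa v) w))))"

definition bn_law :: "('v::finite \<Rightarrow> 'v set) \<Rightarrow> ('v \<Rightarrow> 'a \<Rightarrow> real) \<Rightarrow> ('v \<Rightarrow> ('v \<Rightarrow> 'a) \<Rightarrow> 'a \<Rightarrow> real)
    \<Rightarrow> ('v \<Rightarrow> 'a) \<Rightarrow> real" where
  "bn_law pa \<alpha> P x = (\<Prod>v\<in>{v. pa v = {}}. \<alpha> v (x v)) * (\<Prod>v\<in>{v. pa v \<noteq> {}}. P v (restr (pa v) x) (x v))"

definition bn_prob :: "('v::finite \<Rightarrow> 'v set) \<Rightarrow> ('v \<Rightarrow> 'a::finite \<Rightarrow> real) \<Rightarrow> ('v \<Rightarrow> ('v \<Rightarrow> 'a) \<Rightarrow> 'a \<Rightarrow> real)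
    \<Rightarrow> (('v \<Rightarrow> 'a) \<Rightarrow> bool) \<Rightarrow> real" where
  "bn_prob pa \<alpha> P E = (\<Sum>x\<in>{x. E x}. bn_law pa \<alpha> P x)"

definition bn_cond :: "('v::finite \<Rightarrow> 'v set) \<Rightarrow> ('v \<Rightarrow> 'a::finite \<Rightarrow> real) \<Rightarrow> ('v \<Rightarrow> ('v \<Rightarrow> 'a) \<Rightarrow> 'a \<Rightarrow> real)
    \<Rightarrow> (('v \<Rightarrow> 'a) \<Rightarrow> bool) \<Rightarrow> (('v \<Rightarrow> 'a) \<Rightarrow> bool) \<Rightarrow> real" where
  "bn_cond pa \<alpha> P E F = bn_prob pa \<alpha> P (\<lambda>x. E x \<and> F x) / bn_prob pa \<alpha> P F"

definition full_support :: "('v::finite \<Rightarrow> 'v set) \<Rightarrow> ('v \<Rightarrow> 'a::finite \<Rightarrow> real) \<Rightarrow> ('v \<Rightarrow> ('v \<Rightarrow> 'a) \<Rightarrow> 'a \<Rightarrow> real) \<Rightarrow> bool" where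
  "full_support pa \<alpha> P \<longleftrightarrow> (\<forall>x. 0 < bn_law pa \<alpha> P x)"

definition D3 :: "('v::finite \<Rightarrow> 'v set) \<Rightarrow> ('v \<Rightarrow> ('v \<Rightarrow> 'a) \<Rightarrow> 'a::finite \<Rightarrow> real) \<Rightarrow> ('a \<Rightarrow> 'b::finite) \<Rightarrow> bool" where
  "D3 pa P f \<longleftrightarrow>
     (\<forall>\<alpha>'. valid_init pa \<alpha>' \<longrightarrow>
        (\<exists>q :: 'v \<Rightarrow> ('v \<Rightarrow> 'b) \<Rightarrow> 'b \<Rightarrow> real.
           (\<forall>v c. is_dist (q v (restr (pa v) c))) \<and>
           (\<forall>u :: 'v \<Rightarrow> 'b. bn_prob pa \<alpha>' P (\<lambda>x. (f \<circ> x) = u)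
                = (\<Prod>v\<in>UNIV. q v (restr (pa v) u) (u v))))) \<and>
     (\<forall>v. pa v \<noteq> {} \<longrightarrow> (\<forall>b :: 'b. \<forall>c :: 'v \<Rightarrow> 'b. \<forall>\<alpha>1 \<alpha>2.
        valid_init pa \<alpha>1 \<longrightarrow> valid_init pa \<alpha>2 \<longrightarrow>
        0 < bn_prob pa \<alpha>1 P (\<lambda>x. \<forall>u\<in>pa v. f (x u) = c u) \<longrightarrow>
        0 < bn_prob pa \<alpha>2 P (\<lambda>x. \<forall>u\<in>pa v. f (x u) = c u) \<longrightarrow>
        bn_cond pa \<alpha>1 P (\<lambda>x. f (x v) = b) (\<lambda>x. \<forall>u\<in>pa v. f (x u) = c u)
        = bn_cond pa \<alpha>2 P (\<lambda>x. f (x v) = b) (\<lambda>x. \<forall>u\<in>pa v. f (x u) = c u)))"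

end

theory Submission imports Defs begin

lemma path_trancl:
  assumes "is_path pa xs" "j < length xs" "i < j"
  shows "(xs ! i, xs ! j) \<in> (edges pa)\<^sup>+"
  using assms(2,3)
proof (induction j)
  case 0 then show ?case by simp
next
  case (Suc j)
  have e: "(xs ! j, xs ! Suc j) \<in> edges pa"
    using assms(1) Suc.prems by (auto simp: is_path_def edges_def)
  show ?case
  proof (cases "i = j")
    case True then show ?thesis using e by auto
  next
    case False
    then have "(xs ! i, xs ! j) \<in> (edges pa)\<^sup>+" using Suc by auto
    then show ?thesis using e by (meson trancl.trancl_into_trancl)
  qed
qed

lemma path_distinct:
  assumes "is_dag pa" "is_path pa xs"
  shows "distinct xs"
proof -
  { fix i j assume ij: "i < length xs" "j < length xs" "i \<noteq> j" "xs ! i = xs ! j"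
    have False
    proof (cases "i < j")
      case True
      then show ?thesis using path_trancl[OF assms(2) ij(2) True] ij(4) assms(1)
        by (simp add: is_dag_def acyclic_def)
    next
      case False
      then have "j < i" using ij by simp
      then show ?thesis using path_trancl[OF assms(2) ij(1) \<open>j < i\<close>] ij(4) assms(1)
        by (simp add: is_dag_def acyclic_def)
    qed }
  then show ?thesis by (auto simp: distinct_conv_nth)
qed

lemma path_len:
  fixes pa :: "'v::finite \<Rightarrow> 'v set"
  assumes "is_dag pa" "is_path pa xs"
  shows "length xs \<le> card (UNIV :: 'v set)"
proof -
  have "length xs = card (set xs)" using path_distinct[OF assms] by (simp add: distinct_card)
  also have "\<dots> \<le> card (UNIV :: 'v set)" by (rule card_mono) auto
  finally show ?thesis .
qed

lemma root_path:
  fixes pa :: "'v::finite \<Rightarrow> 'v set"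
  assumes "is_dag pa"
  shows "\<exists>xs. is_path pa xs \<and> pa (hd xs) = {} \<and> last xs = x"
proof -
  have "finite (edges pa)" by simp
  then have wf: "wf (edges pa)" using assms finite_acyclic_wf unfolding is_dag_def by blast
  show ?thesis
  proof (induction x rule: wf_induct[OF wf])
    case (1 x)
    show ?case
    proof (cases "pa x = {}")
      case True
      then show ?thesis by (intro exI[of _ "[x]"]) (auto simp: is_path_def)
    next
      case False
      then obtain y where y: "y \<in> pa x" by auto
      then have "(y, x) \<in> edges pa" by (simp add: edges_def)
      then obtain ys where ys: "is_path pa ys" "pa (hd ys) = {}" "last ys = y" using 1 by blast
      have "is_path pa (ys @ [x])"
        unfolding is_path_def
      proof (intro conjI allI impI)
        fix i assume i: "Suc i < length (ys @ [x])"
        show "(ys @ [x]) ! i \<in> pa ((ys @ [x]) ! Suc i)"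
        proof (cases "Suc i < length ys")
          case True then show ?thesis using ys(1) by (auto simp: is_path_def nth_append)
        next
          case False
          then have "i = length ys - 1" "i < length ys" using i by simp_all
          then show ?thesis using ys y
            by (auto simp: nth_append is_path_def last_conv_nth)
        qed
      qed simp
      moreover have "hd (ys @ [x]) = hd ys" using ys(1) by (simp add: is_path_def)
      ultimately show ?thesis using ys by (intro exI[of _ "ys @ [x]"]) auto
    qed
  qed
qed

lemma depth1_roots:
  fixes pa :: "'v::finite \<Rightarrow> 'v set"
  assumes "is_dag pa" "depth pa v = 1" "u \<in> pa v"
  shows "pa u = {}"
proof (rule ccontr)
  assume "pa u \<noteq> {}"
  then obtain u' where u': "u' \<in> pa u" by auto
  obtain ys where ys: "is_path pa ys" "pa (hd ys) = {}" "last ys = u'"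
    using root_path[OF assms(1)] by blast
  let ?zs = "ys @ [u, v]"
  have "is_path pa ?zs"
    unfolding is_path_def
  proof (intro conjI allI impI)
    fix i assume i: "Suc i < length ?zs"
    show "?zs ! i \<in> pa (?zs ! Suc i)"
    proof (cases "Suc i < length ys")
      case True then show ?thesis using ys(1) by (auto simp: is_path_def nth_append)
    next
      case False
      have ne: "ys \<noteq> []" using ys(1) by (simp add: is_path_def)
      have "Suc i = length ys \<or> Suc i = Suc (length ys)" using i False by auto
      then show ?thesis
      proof
        assume "Suc i = length ys"
        then have "i = length ys - 1" "i < length ys" by simp_all
        then show ?thesis using ys u' ne by (simp add: nth_append last_conv_nth)
      next
        assume "Suc i = Suc (length ys)"
        then have "i = length ys" by simp
        then show ?thesis using assms(3) by (simp add: nth_append)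
      qed
    qed
  qed simp
  moreover have "hd ?zs = hd ys" using ys(1) by (simp add: is_path_def)
  ultimately have mem: "length ?zs - 1 \<in> {length xs - 1 | xs. is_path pa xs \<and> pa (hd xs) = {} \<and> last xs = v}"
    using ys by (intro CollectI exI[of _ ?zs]) auto
  have fin: "finite {length xs - 1 | xs. is_path pa xs \<and> pa (hd xs) = {} \<and> last xs = v}"
    by (rule finite_subset[of _ "{..card (UNIV::'v set)}"]) (auto dest: path_len[OF assms(1)])
  have "length ?zs - 1 \<le> depth pa v" unfolding depth_def using Max_ge[OF fin mem] .
  moreover have "length ?zs - 1 \<ge> 2" using ys(1) by (cases ys) (auto simp: is_path_def)
  ultimately show False using assms(2) by simp
qed

lemma law_shift:
  fixes pa :: "'v::finite \<Rightarrow> 'v set" and \<alpha> :: "'v \<Rightarrow> 'a::finite \<Rightarrow> real"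
  assumes roots: "\<forall>u\<in>S. pa u = {}"
  shows "bn_law pa (\<lambda>u a. if u \<in> S then (if a = w u then 1 else 0) else \<alpha> u a) P x
           * (\<Prod>u\<in>S. \<alpha> u (w u))
         = (if \<forall>u\<in>S. x u = w u then bn_law pa \<alpha> P x else 0)"
proof -
  let ?aw = "\<lambda>u a. if u \<in> S then (if a = w u then 1 else 0) else \<alpha> u a"
  let ?R = "{v. pa v = {}}"
  let ?Q = "\<Prod>v\<in>{v. pa v \<noteq> {}}. P v (restr (pa v) x) (x v)"
  have SR: "S \<subseteq> ?R" using roots by auto
  have d1: "(\<Prod>v\<in>?R. ?aw v (x v)) = (\<Prod>v\<in>?R - S. ?aw v (x v)) * (\<Prod>v\<in>S. ?aw v (x v))"
    by (rule prod.subset_diff[OF SR]) simp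
  have d2: "(\<Prod>v\<in>?R. \<alpha> v (x v)) = (\<Prod>v\<in>?R - S. \<alpha> v (x v)) * (\<Prod>v\<in>S. \<alpha> v (x v))"
    by (rule prod.subset_diff[OF SR]) simp
  have e: "(\<Prod>v\<in>?R - S. ?aw v (x v)) = (\<Prod>v\<in>?R - S. \<alpha> v (x v))"
    by (rule prod.cong) auto
  show ?thesis
  proof (cases "\<forall>u\<in>S. x u = w u")
    case True
    have "(\<Prod>v\<in>S. ?aw v (x v)) = 1" using True by (intro prod.neutral) auto
    moreover have "(\<Prod>u\<in>S. \<alpha> u (w u)) = (\<Prod>v\<in>S. \<alpha> v (x v))"
      using True by (intro prod.cong) auto
    ultimately show ?thesis using True d1 d2 e unfolding bn_law_def by simp
  next
    case False
    then obtain u where "u \<in> S" "x u \<noteq> w u" by auto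
    then have "(\<Prod>v\<in>S. ?aw v (x v)) = 0" by (subst prod_zero_iff) auto
    then have "(\<Prod>v\<in>?R. ?aw v (x v)) = 0" using d1 by simp
    then show ?thesis unfolding if_not_P[OF False] bn_law_def by simp
  qed
qed

lemma prob_shift:
  fixes pa :: "'v::finite \<Rightarrow> 'v set" and \<alpha> :: "'v \<Rightarrow> 'a::finite \<Rightarrow> real"
  assumes roots: "\<forall>u\<in>S. pa u = {}"
  shows "bn_prob pa (\<lambda>u a. if u \<in> S then (if a = w u then 1 else 0) else \<alpha> u a) P G
           * (\<Prod>u\<in>S. \<alpha> u (w u))
         = bn_prob pa \<alpha> P (\<lambda>x. G x \<and> (\<forall>u\<in>S. x u = w u))"
proof -
  have "bn_prob pa (\<lambda>u a. if u \<in> S then (if a = w u then 1 else 0) else \<alpha> u a) P G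
           * (\<Prod>u\<in>S. \<alpha> u (w u))
      = (\<Sum>x\<in>{x. G x}. if \<forall>u\<in>S. x u = w u then bn_law pa \<alpha> P x else 0)"
    unfolding bn_prob_def sum_distrib_right by (rule sum.cong[OF refl]) (rule law_shift[OF roots])
  also have "\<dots> = bn_prob pa \<alpha> P (\<lambda>x. G x \<and> (\<forall>u\<in>S. x u = w u))"
    unfolding bn_prob_def
    by (subst sum.inter_filter[symmetric]) (auto intro: sum.cong)
  finally show ?thesis .
qed

lemma cond_shift:
  fixes pa :: "'v::finite \<Rightarrow> 'v set" and \<alpha> :: "'v \<Rightarrow> 'a::finite \<Rightarrow> real"
  assumes roots: "\<forall>u\<in>S. pa u = {}"
    and K: "(\<Prod>u\<in>S. \<alpha> u (w u)) \<noteq> 0"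
    and FC: "\<And>x. (\<forall>u\<in>S. x u = w u) \<Longrightarrow> C x"
  shows "bn_cond pa (\<lambda>u a. if u \<in> S then (if a = w u then 1 else 0) else \<alpha> u a) P E C
       = bn_cond pa \<alpha> P E (\<lambda>x. \<forall>u\<in>S. x u = w u)"
proof -
  let ?aw = "\<lambda>u a. if u \<in> S then (if a = w u then 1 else 0) else \<alpha> u a"
  let ?K = "\<Prod>u\<in>S. \<alpha> u (w u)"
  let ?F = "\<lambda>x. \<forall>u\<in>S. x u = w u"
  have n: "bn_prob pa ?aw P (\<lambda>x. E x \<and> C x) * ?K = bn_prob pa \<alpha> P (\<lambda>x. E x \<and> ?F x)"
  proof -
    have eq: "(\<lambda>x. (E x \<and> C x) \<and> ?F x) = (\<lambda>x. E x \<and> ?F x)" using FC by auto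
    show ?thesis using prob_shift[OF roots, of w \<alpha> P "\<lambda>x. E x \<and> C x"] unfolding eq .
  qed
  have d: "bn_prob pa ?aw P C * ?K = bn_prob pa \<alpha> P ?F"
  proof -
    have eq: "(\<lambda>x. C x \<and> ?F x) = ?F" using FC by auto
    show ?thesis using prob_shift[OF roots, of w \<alpha> P C] unfolding eq .
  qed
  have "bn_cond pa ?aw P E C = (bn_prob pa ?aw P (\<lambda>x. E x \<and> C x) * ?K) / (bn_prob pa ?aw P C * ?K)"
    unfolding bn_cond_def using K by simp
  then show ?thesis unfolding n d bn_cond_def .
qed

lemma prob_pos:
  fixes pa :: "'v::finite \<Rightarrow> 'v set" and \<alpha> :: "'v \<Rightarrow> 'a::finite \<Rightarrow> real"
  assumes "full_support pa \<alpha> P" "E y"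
  shows "0 < bn_prob pa \<alpha> P E"
  unfolding bn_prob_def
  by (rule sum_pos) (use assms in \<open>auto simp: full_support_def\<close>)

lemma valid_init_shift:
  assumes "valid_init pa \<alpha>"
  shows "valid_init pa (\<lambda>u a. if u \<in> S then (if a = w u then 1 else 0) else \<alpha> u a)"
  unfolding valid_init_def is_dist_def
proof (intro allI impI conjI)
  fix v :: 'a and a assume r: "pa v = {}"
  show "0 \<le> (if v \<in> S then (if a = w v then 1 else 0) else \<alpha> v a)"
    using assms r by (auto simp: valid_init_def is_dist_def)
next
  fix v :: 'a assume r: "pa v = {}"
  show "(\<Sum>a\<in>UNIV. if v \<in> S then (if a = w v then 1 else 0) else \<alpha> v a) = (1::real)"
  proof (cases "v \<in> S")
    case True then show ?thesis by simp
  next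
    case False then show ?thesis using assms r by (simp add: valid_init_def is_dist_def)
  qed
qed

lemma K_pos:
  fixes pa :: "'v::finite \<Rightarrow> 'v set" and \<alpha> :: "'v \<Rightarrow> 'a::finite \<Rightarrow> real"
  assumes roots: "\<forall>u\<in>S. pa u = {}" and vi: "valid_init pa \<alpha>" and fs: "full_support pa \<alpha> P"
  shows "0 < (\<Prod>u\<in>S. \<alpha> u (w u))"
proof (rule prod_pos)
  fix u assume u: "u \<in> S"
  have nn: "0 \<le> \<alpha> u (w u)" using vi roots u by (auto simp: valid_init_def is_dist_def)
  have "\<alpha> u (w u) \<noteq> 0"
  proof
    assume z: "\<alpha> u (w u) = 0"
    have "(\<Prod>v\<in>{v. pa v = {}}. \<alpha> v (w v)) = 0"
      using z u roots by (subst prod_zero_iff) auto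
    then have "bn_law pa \<alpha> P w = 0" by (simp add: bn_law_def)
    moreover have "0 < bn_law pa \<alpha> P w" using fs by (simp add: full_support_def)
    ultimately show False by simp
  qed
  then show "0 < \<alpha> u (w u)" using nn by simp
qed

theorem mainTheorem12:
  fixes pa :: "'v::finite \<Rightarrow> 'v set"
    and \<alpha> :: "'v \<Rightarrow> 'a::finite \<Rightarrow> real"
    and P :: "'v \<Rightarrow> ('v \<Rightarrow> 'a) \<Rightarrow> 'a \<Rightarrow> real"
    and f :: "'a \<Rightarrow> 'b::finite"
  assumes "is_dag pa"
    and "valid_init pa \<alpha>"
    and "valid_cpds pa P"
    and "full_support pa \<alpha> P"
    and "surj f"
    and "D3 pa P f"
    and "depth pa v = 1"
    and "\<forall>u\<in>pa v. f (w u) = f (w' u)"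
  shows "bn_cond pa \<alpha> P (\<lambda>x. f (x v) = b) (\<lambda>x. \<forall>u\<in>pa v. x u = w u)
       = bn_cond pa \<alpha> P (\<lambda>x. f (x v) = b) (\<lambda>x. \<forall>u\<in>pa v. x u = w' u)"
proof (cases "pa v = {}")
  case True then show ?thesis by simp
next
  case ne: False
  let ?S = "pa v"
  have roots: "\<forall>u\<in>?S. pa u = {}" using depth1_roots[OF assms(1) assms(7)] by blast
  let ?c = "\<lambda>u. f (w u)"
  let ?C = "\<lambda>x. \<forall>u\<in>pa v. f (x u) = ?c u"
  let ?E = "\<lambda>x. f (x v) = b"
  define a1 where "a1 = (\<lambda>u a. if u \<in> ?S then (if a = w u then 1 else 0) else \<alpha> u a)"
  define a2 where "a2 = (\<lambda>u a. if u \<in> ?S then (if a = w' u then 1 else 0) else \<alpha> u a)"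
  have K1: "0 < (\<Prod>u\<in>?S. \<alpha> u (w u))" by (rule K_pos[OF roots assms(2,4)])
  have K2: "0 < (\<Prod>u\<in>?S. \<alpha> u (w' u))" by (rule K_pos[OF roots assms(2,4)])
  have FC1: "\<And>x. (\<forall>u\<in>?S. x u = w u) \<Longrightarrow> ?C x" by auto
  have FC2: "\<And>x. (\<forall>u\<in>?S. x u = w' u) \<Longrightarrow> ?C x" using assms(8) by auto
  have c1: "bn_cond pa a1 P ?E ?C = bn_cond pa \<alpha> P ?E (\<lambda>x. \<forall>u\<in>?S. x u = w u)"
    unfolding a1_def by (rule cond_shift[OF roots _ FC1]) (use K1 in linarith)
  have c2: "bn_cond pa a2 P ?E ?C = bn_cond pa \<alpha> P ?E (\<lambda>x. \<forall>u\<in>?S. x u = w' u)"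
    unfolding a2_def by (rule cond_shift[OF roots _ FC2]) (use K2 in linarith)
  have v1: "valid_init pa a1" unfolding a1_def by (rule valid_init_shift[OF assms(2)])
  have v2: "valid_init pa a2" unfolding a2_def by (rule valid_init_shift[OF assms(2)])
  have p1: "0 < bn_prob pa a1 P ?C"
  proof -
    have eq: "(\<lambda>x. ?C x \<and> (\<forall>u\<in>?S. x u = w u)) = (\<lambda>x. \<forall>u\<in>?S. x u = w u)" using FC1 by auto
    have "bn_prob pa a1 P ?C * (\<Prod>u\<in>?S. \<alpha> u (w u)) = bn_prob pa \<alpha> P (\<lambda>x. \<forall>u\<in>?S. x u = w u)"
      unfolding a1_def using prob_shift[OF roots, of w \<alpha> P ?C] unfolding eq .
    moreover have "0 < bn_prob pa \<alpha> P (\<lambda>x. \<forall>u\<in>?S. x u = w u)"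
      by (rule prob_pos[OF assms(4), of _ w]) simp
    ultimately have "0 < bn_prob pa a1 P ?C * (\<Prod>u\<in>?S. \<alpha> u (w u))" by simp
    then show ?thesis by (rule zero_less_mult_pos2[OF _ K1])
  qed
  have p2: "0 < bn_prob pa a2 P ?C"
  proof -
    have eq: "(\<lambda>x. ?C x \<and> (\<forall>u\<in>?S. x u = w' u)) = (\<lambda>x. \<forall>u\<in>?S. x u = w' u)" using FC2 by auto
    have "bn_prob pa a2 P ?C * (\<Prod>u\<in>?S. \<alpha> u (w' u)) = bn_prob pa \<alpha> P (\<lambda>x. \<forall>u\<in>?S. x u = w' u)"
      unfolding a2_def using prob_shift[OF roots, of w' \<alpha> P ?C] unfolding eq .
    moreover have "0 < bn_prob pa \<alpha> P (\<lambda>x. \<forall>u\<in>?S. x u = w' u)"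
      by (rule prob_pos[OF assms(4), of _ w']) simp
    ultimately have "0 < bn_prob pa a2 P ?C * (\<Prod>u\<in>?S. \<alpha> u (w' u))" by simp
    then show ?thesis by (rule zero_less_mult_pos2[OF _ K2])
  qed
  have "bn_cond pa a1 P ?E ?C = bn_cond pa a2 P ?E ?C"
  proof -
    have "\<forall>b c \<alpha>1 \<alpha>2. valid_init pa \<alpha>1 \<longrightarrow> valid_init pa \<alpha>2 \<longrightarrow>
        0 < bn_prob pa \<alpha>1 P (\<lambda>x. \<forall>u\<in>pa v. f (x u) = c u) \<longrightarrow>
        0 < bn_prob pa \<alpha>2 P (\<lambda>x. \<forall>u\<in>pa v. f (x u) = c u) \<longrightarrow>
        bn_cond pa \<alpha>1 P (\<lambda>x. f (x v) = b) (\<lambda>x. \<forall>u\<in>pa v. f (x u) = c u)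
        = bn_cond pa \<alpha>2 P (\<lambda>x. f (x v) = b) (\<lambda>x. \<forall>u\<in>pa v. f (x u) = c u)"
      using assms(6) ne unfolding D3_def by blast
    note D = this
    show ?thesis by (rule D[rule_format, OF v1 v2 p1 p2])
  qed
  then show ?thesis using c1 c2 by simp
qed

end
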